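(* Let $T$ be a tree on $n$ nodes, rooted at some node $r$, and let $k\ge1$. Call layer $i$ the set of nodes at distance exactly $i$ from $r$. Let $n_i$ be the number of nodes in layer $i$ (so $n_0=1$), and let $h$ be the depth of $T$, i.e., the largest distance from $r$ to a node. Then $$M^T_{k,n}\le \sum_{i=0}^h M^C_{k,n_i}.$$
   Context: For a graph $G$ on $n$ nodes, a measurement matrix for $G$ is a $0$-$1$ matrix with columns indexed by the nodes in which every nonzero row has a support that induces a connected subgraph of $G$. A vector is $k$-sparse if it has at most $k$ nonzero entries. $A$ identifies all $k$-sparse vectors if $Ax_1\ne Ax_2$ for every two distinct $k$-sparse $x_1,x_2\in\mathbb{R}^n$. $M^G_{k,n}$ is the minimum number of rows of a measurement matrix for $G$ that identifies all $k$-sparse vectors. $M^C_{k,N}$ is the minimum number of rows of an arbitrary $0$-$1$ matrix with $N$ columns that identifies all $k$-sparse vectors in $\mathbb{R}^N$. *)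

theory Defs
  imports Complex_Main
begin

definition graph :: "'a set \<Rightarrow> ('a \<Rightarrow> 'a \<Rightarrow> bool) \<Rightarrow> bool" where
  "graph V E \<longleftrightarrow> finite V \<and> (\<forall>u v. E u v \<longrightarrow> u \<in> V \<and> v \<in> V \<and> u \<noteq> v \<and> E v u)"

definition induces_connected :: "('a \<Rightarrow> 'a \<Rightarrow> bool) \<Rightarrow> 'a set \<Rightarrow> bool" where
  "induces_connected E S \<longleftrightarrow> S \<noteq> {} \<and>
     (\<forall>u\<in>S. \<forall>v\<in>S. (\<lambda>x y. E x y \<and> x \<in> S \<and> y \<in> S)\<^sup>*\<^sup>* u v)"

definition is_cycle :: "'a set \<Rightarrow> ('a \<Rightarrow> 'a \<Rightarrow> bool) \<Rightarrow> 'a list \<Rightarrow> bool" where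
  "is_cycle V E cs \<longleftrightarrow> length cs \<ge> 3 \<and> distinct cs \<and> set cs \<subseteq> V \<and>
     (\<forall>i. Suc i < length cs \<longrightarrow> E (cs ! i) (cs ! Suc i)) \<and> E (last cs) (hd cs)"

definition is_tree :: "'a set \<Rightarrow> ('a \<Rightarrow> 'a \<Rightarrow> bool) \<Rightarrow> bool" where
  "is_tree V E \<longleftrightarrow> graph V E \<and> induces_connected E V \<and> (\<nexists>cs. is_cycle V E cs)"

definition gdist :: "('a \<Rightarrow> 'a \<Rightarrow> bool) \<Rightarrow> 'a \<Rightarrow> 'a \<Rightarrow> nat" where
  "gdist E u v = (LEAST d. (E ^^ d) u v)"

definition layer :: "'a set \<Rightarrow> ('a \<Rightarrow> 'a \<Rightarrow> bool) \<Rightarrow> 'a \<Rightarrow> nat \<Rightarrow> 'a set" where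
  "layer V E r i = {v \<in> V. gdist E r v = i}"

definition depth :: "'a set \<Rightarrow> ('a \<Rightarrow> 'a \<Rightarrow> bool) \<Rightarrow> 'a \<Rightarrow> nat" where
  "depth V E r = Max (gdist E r ` V)"

text \<open>A 0-1 matrix with columns indexed by a set C is represented as the list of its rows,
  each row given by its support (a subset of C). The product A x is the list of row sums.\<close>

definition mat_mult :: "'a set list \<Rightarrow> ('a \<Rightarrow> real) \<Rightarrow> real list" where
  "mat_mult A x = map (\<lambda>S. \<Sum>v\<in>S. x v) A"

text \<open>Vectors in R^C: real functions vanishing outside C.  k-sparse: at most k nonzero entries.\<close>
definition sparse_vec :: "'a set \<Rightarrow> nat \<Rightarrow> ('a \<Rightarrow> real) \<Rightarrow> bool" where
  "sparse_vec C k x \<longleftrightarrow> (\<forall>v. v \<notin> C \<longrightarrow> x v = 0) \<and> card {v \<in> C. x v \<noteq> 0} \<le> k"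

definition identifies :: "'a set \<Rightarrow> nat \<Rightarrow> 'a set list \<Rightarrow> bool" where
  "identifies C k A \<longleftrightarrow> (\<forall>x1 x2. sparse_vec C k x1 \<and> sparse_vec C k x2 \<and> x1 \<noteq> x2
      \<longrightarrow> mat_mult A x1 \<noteq> mat_mult A x2)"

definition zero_one_matrix :: "'a set \<Rightarrow> 'a set list \<Rightarrow> bool" where
  "zero_one_matrix C A \<longleftrightarrow> (\<forall>S\<in>set A. S \<subseteq> C)"

definition measurement_matrix :: "'a set \<Rightarrow> ('a \<Rightarrow> 'a \<Rightarrow> bool) \<Rightarrow> 'a set list \<Rightarrow> bool" where
  "measurement_matrix V E A \<longleftrightarrow> zero_one_matrix V A \<and>
     (\<forall>S\<in>set A. S \<noteq> {} \<longrightarrow> induces_connected E S)"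

definition M_G :: "'a set \<Rightarrow> ('a \<Rightarrow> 'a \<Rightarrow> bool) \<Rightarrow> nat \<Rightarrow> nat" where
  "M_G V E k = (LEAST m. \<exists>A. length A = m \<and> measurement_matrix V E A \<and> identifies V k A)"

definition M_C :: "nat \<Rightarrow> nat \<Rightarrow> nat" where
  "M_C k N = (LEAST m. \<exists>A::nat set list. length A = m \<and> zero_one_matrix {..<N} A
                 \<and> identifies {..<N} k A)"

end

theory Submission imports Defs begin

lemma sum_img:
  fixes y :: "'a \<Rightarrow> real"
  assumes "bij_betw g {..<n} L" "S \<subseteq> {..<n}"
  shows "(\<Sum>j\<in>S. (if j < n then y (g j) else 0)) = (\<Sum>v\<in>g ` S. y v)"
proof -
  have inj: "inj_on g S" using assms bij_betw_imp_inj_on inj_on_subset by blast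
  have "(\<Sum>j\<in>S. (if j < n then y (g j) else 0)) = (\<Sum>j\<in>S. y (g j))"
    by (rule sum.cong) (use assms(2) in auto)
  also have "\<dots> = (\<Sum>v\<in>g ` S. y v)" using sum.reindex[OF inj, of y] by simp
  finally show ?thesis .
qed

lemma transfer:
  fixes y1 y2 :: "'a \<Rightarrow> real" and g :: "nat \<Rightarrow> 'a"
  assumes bij: "bij_betw g {..<n} L" and idA: "identifies {..<n} k A"
    and zo: "zero_one_matrix {..<n} A"
    and sp1: "card {v\<in>L. y1 v \<noteq> 0} \<le> k" and sp2: "card {v\<in>L. y2 v \<noteq> 0} \<le> k"
    and fin: "finite L"
    and eqs: "\<forall>S\<in>set A. (\<Sum>v\<in>g ` S. y1 v) = (\<Sum>v\<in>g ` S. y2 v)"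
  shows "\<forall>v\<in>L. y1 v = y2 v"
proof -
  define z1 where "z1 j = (if j < n then y1 (g j) else 0)" for j
  define z2 where "z2 j = (if j < n then y2 (g j) else 0)" for j
  have spz: "sparse_vec {..<n} k (\<lambda>j. if j < n then y (g j) else 0)"
    if sp: "card {v\<in>L. y v \<noteq> 0} \<le> k" for y :: "'a \<Rightarrow> real"
  proof -
    have inj: "inj_on g {j\<in>{..<n}. (if j < n then y (g j) else 0) \<noteq> 0}"
      by (rule inj_on_subset[OF bij_betw_imp_inj_on[OF bij]]) blast
    have "g ` {j\<in>{..<n}. (if j < n then y (g j) else 0) \<noteq> 0} \<subseteq> {v\<in>L. y v \<noteq> 0}"
      using bij bij_betwE by fastforce
    then have "card {j\<in>{..<n}. (if j < n then y (g j) else 0) \<noteq> 0} \<le> card {v\<in>L. y v \<noteq> 0}"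
      using card_inj_on_le[OF inj] fin by simp
    then show ?thesis using sp by (simp add: sparse_vec_def)
  qed
  have s1: "sparse_vec {..<n} k z1" using spz[OF sp1] by (simp add: z1_def[abs_def])
  have s2: "sparse_vec {..<n} k z2" using spz[OF sp2] by (simp add: z2_def[abs_def])
  have "mat_mult A z1 = mat_mult A z2"
    unfolding mat_mult_def map_eq_conv
  proof
    fix S assume S: "S \<in> set A"
    then have Ss: "S \<subseteq> {..<n}" using zo by (simp add: zero_one_matrix_def)
    show "(\<Sum>v\<in>S. z1 v) = (\<Sum>v\<in>S. z2 v)"
      using sum_img[OF bij Ss, of y1] sum_img[OF bij Ss, of y2] eqs S
      by (simp add: z1_def z2_def)
  qed
  then have zz: "z1 = z2" using idA s1 s2 unfolding identifies_def by blast
  show ?thesis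
  proof
    fix v assume "v \<in> L"
    then have "v \<in> g ` {..<n}" using bij by (simp add: bij_betw_def)
    then obtain j where "j < n" "g j = v" by blast
    then show "y1 v = y2 v" using fun_cong[OF zz, of j] by (simp add: z1_def z2_def)
  qed
qed

lemma M_C_ex: "\<exists>A. length A = M_C k N \<and> zero_one_matrix {..<N} A \<and> identifies {..<N} k A"
proof -
  let ?A = "map (\<lambda>j. {j}) [0..<N]"
  have "zero_one_matrix {..<N} ?A" by (auto simp: zero_one_matrix_def)
  moreover have "identifies {..<N} k ?A"
    unfolding identifies_def
  proof (intro allI impI, elim conjE)
    fix x1 x2 :: "nat \<Rightarrow> real"
    assume s1: "sparse_vec {..<N} k x1" and s2: "sparse_vec {..<N} k x2" and ne: "x1 \<noteq> x2"
    show "mat_mult ?A x1 \<noteq> mat_mult ?A x2"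
    proof
      assume "mat_mult ?A x1 = mat_mult ?A x2"
      then have "\<forall>j\<in>set [0..<N]. x1 j = x2 j" by (simp add: mat_mult_def map_eq_conv)
      then have "x1 j = x2 j" for j using s1 s2 by (cases "j < N") (auto simp: sparse_vec_def)
      then have "x1 = x2" by blast
      then show False using ne by simp
    qed
  qed
  ultimately have "\<exists>m A. length A = m \<and> zero_one_matrix {..<N} A \<and> identifies {..<N} k A" by blast
  then show ?thesis unfolding M_C_def by (rule LeastI_ex)
qed

lemma M_C_pos: assumes "1 \<le> k" "1 \<le> N" shows "1 \<le> M_C k N"
proof (rule ccontr)
  assume "\<not> 1 \<le> M_C k N"
  then have "M_C k N = 0" by simp
  then obtain A where A: "length A = 0" "identifies {..<N} k A" using M_C_ex[of k N] by auto
  have "sparse_vec {..<N} k (\<lambda>_. 0)" by (simp add: sparse_vec_def)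
  moreover have "sparse_vec {..<N} k (\<lambda>j. if j = 0 then 1 else 0)"
  proof -
    have "{v \<in> {..<N}. (if v = 0 then 1 else 0 :: real) \<noteq> 0} = {0}" using assms by auto
    then show ?thesis using assms by (simp add: sparse_vec_def)
  qed
  moreover have "(\<lambda>_. 0 :: real) \<noteq> (\<lambda>j. if j = 0 then 1 else 0)" by (metis one_neq_zero)
  ultimately show False using A by (auto simp: identifies_def mat_mult_def)
qed

locale ctx =
  fixes V :: "'a set" and E :: "'a \<Rightarrow> 'a \<Rightarrow> bool" and r :: 'a
  assumes gr: "graph V E" and conn: "induces_connected E V" and rV: "r \<in> V"
begin

definition dist where "dist w = gdist E r w"

lemma finV: "finite V" using gr by (simp add: graph_def)
lemma Esym: "E u v \<Longrightarrow> E v u" using gr by (simp add: graph_def)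
lemma EV: "E u v \<Longrightarrow> u \<in> V \<and> v \<in> V" using gr by (simp add: graph_def)

lemma reach: assumes "w \<in> V" shows "(E ^^ dist w) r w"
proof -
  have "(\<lambda>x y. E x y \<and> x \<in> V \<and> y \<in> V)\<^sup>*\<^sup>* r w" using conn rV assms
    by (simp add: induces_connected_def)
  then have "E\<^sup>*\<^sup>* r w" using rtranclp_mono[of "\<lambda>x y. E x y \<and> x \<in> V \<and> y \<in> V" E] by blast
  then obtain n where "(E ^^ n) r w" using rtranclp_imp_relpowp by metis
  then show ?thesis unfolding dist_def gdist_def by (rule LeastI)
qed

lemma dist_le: "(E ^^ n) r w \<Longrightarrow> dist w \<le> n"
  unfolding dist_def gdist_def by (rule Least_le)

lemma dist_r: "dist r = 0" using dist_le[of 0 r] by simp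

lemma dist0: "w \<in> V \<Longrightarrow> dist w = 0 \<Longrightarrow> w = r"
  using reach[of w] by simp

lemma parent_ex: assumes "w \<in> V" "dist w > 0"
  shows "\<exists>u. u \<in> V \<and> E u w \<and> dist u = dist w - 1"
proof -
  obtain m where m: "dist w = Suc m" using assms by (cases "dist w") auto
  have "(E ^^ Suc m) r w" using reach[OF assms(1)] m by simp
  then obtain u where u: "(E ^^ m) r u" "E u w" by (rule relpowp_Suc_E)
  have "dist u \<le> m" using dist_le[OF u(1)] .
  moreover have "(E ^^ Suc (dist u)) r w" using reach[of u] EV[OF u(2)] u(2)
    by (meson relpowp_Suc_I)
  then have "dist w \<le> Suc (dist u)" by (rule dist_le)
  ultimately show ?thesis using u EV[OF u(2)] m by auto
qed

definition par where "par w = (SOME u. u \<in> V \<and> E u w \<and> dist u = dist w - 1)"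

lemma par: "w \<in> V \<Longrightarrow> dist w > 0 \<Longrightarrow> par w \<in> V \<and> E (par w) w \<and> dist (par w) = dist w - 1"
  unfolding par_def by (rule someI_ex) (rule parent_ex)

definition anc where "anc j w = (par ^^ j) w"

lemma anc_Suc: "anc (Suc j) w = par (anc j w)" by (simp add: anc_def)
lemma anc_0[simp]: "anc 0 w = w" by (simp add: anc_def)
lemma anc_add: "anc (a + b) w = anc a (anc b w)" by (simp add: anc_def funpow_add)

lemma anc: "w \<in> V \<Longrightarrow> j \<le> dist w \<Longrightarrow> anc j w \<in> V \<and> dist (anc j w) = dist w - j"
proof (induction j)
  case 0 then show ?case by simp
next
  case (Suc j)
  then have "anc j w \<in> V" "dist (anc j w) = dist w - j" by auto
  then show ?case using par[of "anc j w"] Suc.prems by (simp add: anc_Suc)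
qed

lemma anc_E: "w \<in> V \<Longrightarrow> j < dist w \<Longrightarrow> E (anc (Suc j) w) (anc j w)"
  using anc[of w j] par[of "anc j w"] by (simp add: anc_Suc)

lemma anc_top: "w \<in> V \<Longrightarrow> anc (dist w) w = r"
  using anc[of w "dist w"] dist0 by simp

definition D where "D v = {w \<in> V. dist v \<le> dist w \<and> anc (dist w - dist v) w = v}"

lemma D_sub: "D v \<subseteq> V" by (auto simp: D_def)
lemma D_fin: "finite (D v)" using D_sub finV finite_subset by blast
lemma D_self: "v \<in> V \<Longrightarrow> v \<in> D v" by (simp add: D_def)
lemma D_disj: "dist v = dist v' \<Longrightarrow> w \<in> D v \<Longrightarrow> w \<in> D v' \<Longrightarrow> v = v'"
  by (auto simp: D_def)
lemma D_r: "D r = V" using anc_top by (auto simp: D_def dist_r)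

lemma D_split:
  assumes v: "v \<in> V"
  shows "D v = insert v (\<Union>c\<in>{c\<in>V. dist c = Suc (dist v) \<and> c \<in> D v}. D c)"
proof
  show "D v \<subseteq> insert v (\<Union>c\<in>{c\<in>V. dist c = Suc (dist v) \<and> c \<in> D v}. D c)"
  proof
    fix u assume u: "u \<in> D v"
    show "u \<in> insert v (\<Union>c\<in>{c\<in>V. dist c = Suc (dist v) \<and> c \<in> D v}. D c)"
    proof (cases "u = v")
      case False
      have uV: "u \<in> V" and le: "dist v \<le> dist u" and a: "anc (dist u - dist v) u = v"
        using u by (auto simp: D_def)
      have "dist u \<noteq> dist v" using a False by auto
      then have lt: "Suc (dist v) \<le> dist u" using le by simp
      define c where "c = anc (dist u - Suc (dist v)) u"
      have c: "c \<in> V" "dist c = Suc (dist v)" using anc[OF uV, of "dist u - Suc (dist v)"] lt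
        by (auto simp: c_def)
      have "u \<in> D c" using uV c lt by (simp add: D_def c_def)
      moreover have "anc (dist c - dist v) c = v"
      proof -
        have "anc (dist c - dist v) c = anc 1 c" using c(2) by simp
        also have "\<dots> = anc (1 + (dist u - Suc (dist v))) u"
          by (simp only: c_def anc_add)
        also have "1 + (dist u - Suc (dist v)) = dist u - dist v" using lt by simp
        finally show ?thesis using a by metis
      qed
      then have "c \<in> D v" using c by (simp add: D_def)
      ultimately show ?thesis using c by blast
    qed simp
  qed
next
  show "insert v (\<Union>c\<in>{c\<in>V. dist c = Suc (dist v) \<and> c \<in> D v}. D c) \<subseteq> D v"
  proof
    fix u assume "u \<in> insert v (\<Union>c\<in>{c\<in>V. dist c = Suc (dist v) \<and> c \<in> D v}. D c)"
    then consider "u = v" | c where "c \<in> D v" "u \<in> D c" by blast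
    then show "u \<in> D v"
    proof cases
      case 1 then show ?thesis using D_self v by simp
    next
      case 2
      have uV: "u \<in> V" and l1: "dist c \<le> dist u" and a1: "anc (dist u - dist c) u = c"
        and l2: "dist v \<le> dist c" and a2: "anc (dist c - dist v) c = v"
        using 2 by (auto simp: D_def)
      have "anc (dist u - dist v) u = anc ((dist c - dist v) + (dist u - dist c)) u"
        by (rule arg_cong[where f="\<lambda>n. anc n u"]) (use l1 l2 in arith)
      also have "\<dots> = v" using a1 a2 by (simp add: anc_add)
      finally show ?thesis using uV l1 l2 by (simp add: D_def)
    qed
  qed
qed

lemma D_disj_set:
  assumes "\<forall>v\<in>S. dist v = i"
  shows "\<forall>a\<in>S. \<forall>b\<in>S. a \<noteq> b \<longrightarrow> D a \<inter> D b = {}"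
proof (intro ballI impI)
  fix a b assume ab: "a \<in> S" "b \<in> S" "a \<noteq> b"
  show "D a \<inter> D b = {}"
  proof (rule ccontr)
    assume "D a \<inter> D b \<noteq> {}"
    then obtain w where "w \<in> D a" "w \<in> D b" by blast
    moreover have "dist a = dist b" using assms ab by simp
    ultimately show False using D_disj ab(3) by blast
  qed
qed

definition row where "row S = V - \<Union>(D ` S)"

lemma row_conn:
  assumes S: "\<forall>v\<in>S. 1 \<le> dist v"
  shows "induces_connected E (row S)"
proof -
  have rR: "r \<in> row S" using S rV by (auto simp: row_def D_def dist_r)
  have clos: "anc j w \<in> row S" if w: "w \<in> row S" "j \<le> dist w" for w j
  proof (rule ccontr)
    assume "anc j w \<notin> row S"
    have wV: "w \<in> V" using w by (simp add: row_def)
    have aV: "anc j w \<in> V" and da: "dist (anc j w) = dist w - j" using anc[OF wV w(2)] by auto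
    then obtain v where v: "v \<in> S" "anc j w \<in> D v" using \<open>anc j w \<notin> row S\<close> by (auto simp: row_def)
    have l: "dist v \<le> dist w - j" and a: "anc (dist w - j - dist v) (anc j w) = v"
      using v(2) da by (auto simp: D_def)
    have "anc (dist w - dist v) w = anc (dist w - j - dist v + j) w"
      by (rule arg_cong[where f="\<lambda>n. anc n w"]) (use l w(2) in arith)
    also have "\<dots> = v" using a by (simp add: anc_add)
    finally have "w \<in> D v" using wV l by (simp add: D_def)
    then show False using v w by (auto simp: row_def)
  qed
  let ?Q = "\<lambda>x y. E x y \<and> x \<in> row S \<and> y \<in> row S"
  have p1: "?Q\<^sup>*\<^sup>* (anc j w) w \<and> ?Q\<^sup>*\<^sup>* w (anc j w)" if w: "w \<in> row S" "j \<le> dist w" for w j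
    using w(2)
  proof (induction j)
    case 0 then show ?case by simp
  next
    case (Suc j)
    have wV: "w \<in> V" using w by (simp add: row_def)
    have e: "E (anc (Suc j) w) (anc j w)" using anc_E[OF wV] Suc.prems by simp
    have m: "anc (Suc j) w \<in> row S" "anc j w \<in> row S" using clos[OF w(1)] Suc.prems by auto
    have ih: "?Q\<^sup>*\<^sup>* (anc j w) w" "?Q\<^sup>*\<^sup>* w (anc j w)" using Suc by auto
    show ?case
    proof
      show "?Q\<^sup>*\<^sup>* (anc (Suc j) w) w"
        by (rule converse_rtranclp_into_rtranclp[OF _ ih(1)]) (use e m in simp)
      show "?Q\<^sup>*\<^sup>* w (anc (Suc j) w)"
        by (rule rtranclp.rtrancl_into_rtrancl[OF ih(2)]) (use e m Esym in simp)
    qed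
  qed
  have toR: "?Q\<^sup>*\<^sup>* r w \<and> ?Q\<^sup>*\<^sup>* w r" if "w \<in> row S" for w
    using p1[OF that, of "dist w"] anc_top[of w] that by (simp add: row_def)
  show ?thesis unfolding induces_connected_def
  proof (intro conjI ballI)
    show "row S \<noteq> {}" using rR by blast
  next
    fix u v assume u: "u \<in> row S" and v: "v \<in> row S"
    have "?Q\<^sup>*\<^sup>* u r" using toR[OF u] by blast
    moreover have "?Q\<^sup>*\<^sup>* r v" using toR[OF v] by blast
    ultimately show "?Q\<^sup>*\<^sup>* u v" by (rule rtranclp_trans)
  qed
qed

lemma row_sum:
  fixes x :: "'a \<Rightarrow> real"
  assumes "S \<subseteq> {v\<in>V. dist v = i}"
  shows "(\<Sum>w\<in>row S. x w) = (\<Sum>w\<in>V. x w) - (\<Sum>v\<in>S. \<Sum>w\<in>D v. x w)"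
proof -
  have fS: "finite S" using assms finV finite_subset by fastforce
  have "(\<Sum>w\<in>\<Union>(D ` S). x w) = (\<Sum>v\<in>S. \<Sum>w\<in>D v. x w)"
    apply (rule sum.UNION_disjoint[OF fS])
    using D_fin apply blast
    using assms by (intro D_disj_set[of _ i]) auto
  moreover have sub: "\<Union>(D ` S) \<subseteq> V" using D_sub by blast
  ultimately show ?thesis unfolding row_def using sum_diff[OF finV sub, of x] by simp
qed

lemma determ:
  fixes x1 x2 :: "'a \<Rightarrow> real"
  assumes "\<forall>v\<in>V. (\<Sum>w\<in>D v. x1 w) = (\<Sum>w\<in>D v. x2 w)" "w \<in> V"
  shows "x1 w = x2 w"
proof -
  let ?C = "{c\<in>V. dist c = Suc (dist w) \<and> c \<in> D w}"
  have fC: "finite ?C" using finV by simp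
  have nin: "w \<notin> (\<Union>(D ` ?C))" by (auto simp: D_def)
  have fU: "finite (\<Union>(D ` ?C))" using fC D_fin by blast
  have eq: "(\<Sum>u\<in>\<Union>(D ` ?C). x u) = (\<Sum>c\<in>?C. \<Sum>u\<in>D c. x u)" for x :: "'a \<Rightarrow> real"
    apply (rule sum.UNION_disjoint[OF fC])
    using D_fin apply blast
    by (intro D_disj_set[of _ "Suc (dist w)"]) auto
  have Dw: "D w = insert w (\<Union>(D ` ?C))" by (rule D_split[OF assms(2)])
  have spl: "sum x (D w) = x w + (\<Sum>c\<in>?C. sum x (D c))" for x :: "'a \<Rightarrow> real"
  proof -
    have "sum x (D w) = sum x (insert w (\<Union>(D ` ?C)))" by (rule arg_cong[OF Dw])
    also have "\<dots> = x w + sum x (\<Union>(D ` ?C))" by (rule sum.insert[OF fU nin])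
    also have "\<dots> = x w + (\<Sum>c\<in>?C. sum x (D c))" using eq[of x] by simp
    finally show ?thesis .
  qed
  show ?thesis
  proof -
    have "(\<Sum>c\<in>?C. sum x1 (D c)) = (\<Sum>c\<in>?C. sum x2 (D c))"
      by (rule sum.cong) (use assms(1) in auto)
    then show ?thesis using spl[of x1] spl[of x2] assms(1) assms(2) by simp
  qed
qed


lemma dist_eq: "dist = gdist E r" by (simp add: dist_def[abs_def])

lemma y_sparse:
  fixes x :: "'a \<Rightarrow> real"
  assumes sp: "sparse_vec V k x"
  shows "card {v\<in>{v\<in>V. dist v = i}. (\<Sum>w\<in>D v. x w) \<noteq> 0} \<le> k"
proof -
  let ?P = "{v\<in>{v\<in>V. dist v = i}. (\<Sum>w\<in>D v. x w) \<noteq> 0}"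
  define phi where "phi v = (SOME w. w \<in> D v \<and> x w \<noteq> 0)" for v
  have phi: "phi v \<in> D v \<and> x (phi v) \<noteq> 0" if "v \<in> ?P" for v
  proof -
    have "(\<Sum>w\<in>D v. x w) \<noteq> 0" using that by simp
    then obtain w where "w \<in> D v" "x w \<noteq> 0" by (rule sum.not_neutral_contains_not_neutral)
    then have "\<exists>w. w \<in> D v \<and> x w \<noteq> 0" by blast
    then show ?thesis unfolding phi_def by (rule someI_ex)
  qed
  have inj: "inj_on phi ?P"
  proof (rule inj_onI)
    fix a b assume a: "a \<in> ?P" and b: "b \<in> ?P" and e: "phi a = phi b"
    then have "dist a = dist b" by simp
    then show "a = b" using D_disj[of a b "phi a"] phi[OF a] phi[OF b] e by simp
  qed
  have "phi ` ?P \<subseteq> {v\<in>V. x v \<noteq> 0}" using phi D_sub by blast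
  then have "card ?P \<le> card {v\<in>V. x v \<noteq> 0}" using card_inj_on_le[OF inj] finV by simp
  then show ?thesis using sp by (simp add: sparse_vec_def)
qed

lemma main:
  assumes k: "1 \<le> k"
  shows "M_G V E k \<le> (\<Sum>i = 0..depth V E r. M_C k (card (layer V E r i)))"
proof -
  define h where "h = depth V E r"
  define L where "L i = {v\<in>V. dist v = i}" for i
  have Lay: "layer V E r i = L i" for i by (simp add: layer_def L_def dist_def)
  have finL: "finite (L i)" for i using finV by (simp add: L_def)
  have dh: "v \<in> V \<Longrightarrow> dist v \<le> h" for v
    unfolding h_def depth_def dist_eq using finV by (simp add: Max_ge)
  have "\<forall>i. \<exists>g. bij_betw g {..<card (L i)} (L i)"
    using ex_bij_betw_nat_finite[OF finL] by (simp add: atLeast0LessThan)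
  from choice[OF this] obtain g where g0: "\<forall>i. bij_betw (g i) {..<card (L i)} (L i)" by blast
  have g: "\<And>i. bij_betw (g i) {..<card (L i)} (L i)" using g0 by blast
  have "\<forall>i. \<exists>A. length A = M_C k (card (L i)) \<and> zero_one_matrix {..<card (L i)} A
      \<and> identifies {..<card (L i)} k A" using M_C_ex by blast
  from choice[OF this] obtain A where A0: "\<forall>i. length (A i) = M_C k (card (L i)) \<and> zero_one_matrix {..<card (L i)} (A i)
      \<and> identifies {..<card (L i)} k (A i)" by blast
  have A: "\<And>i. length (A i) = M_C k (card (L i)) \<and> zero_one_matrix {..<card (L i)} (A i)
      \<and> identifies {..<card (L i)} k (A i)" using A0 by blast
  have gS: "g i ` S \<subseteq> L i" if "S \<in> set (A i)" for i S
  proof -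
    have "S \<subseteq> {..<card (L i)}" using A[of i] that by (simp add: zero_one_matrix_def)
    then show ?thesis using g[of i] bij_betw_imp_surj_on by blast
  qed
  define B where "B = V # concat (map (\<lambda>i. map (\<lambda>S. row (g i ` S)) (A i)) [1..<Suc h])"
  have "length B = 1 + (\<Sum>i=1..h. M_C k (card (L i)))"
  proof -
    have "length B = 1 + sum_list (map (\<lambda>i. length (A i)) [1..<Suc h])"
      by (simp add: B_def length_concat comp_def)
    also have "\<dots> = 1 + (\<Sum>i\<in>{1..<Suc h}. length (A i))"
      by (simp add: sum_set_upt_conv_sum_list_nat[symmetric])
    also have "\<dots> = 1 + (\<Sum>i=1..h. M_C k (card (L i)))"
      using A by (simp add: atLeastLessThanSuc_atLeastAtMost)
    finally show ?thesis .
  qed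
  moreover have "1 \<le> M_C k (card (L 0))"
  proof -
    have "L 0 = {r}" using dist0 dist_r rV by (auto simp: L_def)
    then show ?thesis using M_C_pos[OF k] by simp
  qed
  ultimately have lenB: "length B \<le> (\<Sum>i = 0..h. M_C k (card (L i)))"
    by (simp add: sum.atLeast_Suc_atMost)
  have setB: "R \<in> set B \<Longrightarrow> R = V \<or> (\<exists>i\<in>{1..h}. \<exists>S\<in>set (A i). R = row (g i ` S))" for R
    by (auto simp: B_def)
  have BV: "V \<in> set B" by (simp add: B_def)
  have Brow: "row (g i ` S) \<in> set B" if "i \<in> {1..h}" "S \<in> set (A i)" for i S
  proof -
    have x: "row (g i ` S) \<in> set (map (\<lambda>S. row (g i ` S)) (A i))" using that(2) by simp
    have m: "map (\<lambda>S. row (g i ` S)) (A i) \<in> set (map (\<lambda>i. map (\<lambda>S. row (g i ` S)) (A i)) [1..<Suc h])"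
      unfolding set_map by (rule imageI) (use that(1) in auto)
    have "row (g i ` S) \<in> set (concat (map (\<lambda>i. map (\<lambda>S. row (g i ` S)) (A i)) [1..<Suc h]))"
      unfolding set_concat using m x by blast
    then show ?thesis unfolding B_def by (rule list.set_intros(2))
  qed
  have mm: "measurement_matrix V E B"
    unfolding measurement_matrix_def zero_one_matrix_def
  proof (intro conjI ballI impI)
    fix R assume R: "R \<in> set B"
    then show "R \<subseteq> V" using setB[OF R] by (auto simp: row_def)
    assume "R \<noteq> {}"
    from R consider "R = V" | i S where "i \<in> {1..h}" "S \<in> set (A i)" "R = row (g i ` S)"
      using setB[OF R] by blast
    then show "induces_connected E R"
    proof cases
      case 1 then show ?thesis using conn by simp
    next
      case 2
      have "\<forall>v\<in>g i ` S. 1 \<le> dist v" using gS[OF 2(2)] 2(1) by (auto simp: L_def)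
      then show ?thesis using row_conn 2(3) by simp
    qed
  qed
  have idB: "identifies V k B"
    unfolding identifies_def
  proof (intro allI impI, elim conjE)
    fix x1 x2 :: "'a \<Rightarrow> real"
    assume s1: "sparse_vec V k x1" and s2: "sparse_vec V k x2" and ne: "x1 \<noteq> x2"
    show "mat_mult B x1 \<noteq> mat_mult B x2"
    proof
      assume "mat_mult B x1 = mat_mult B x2"
      then have rows: "\<And>R. R \<in> set B \<Longrightarrow> (\<Sum>w\<in>R. x1 w) = (\<Sum>w\<in>R. x2 w)"
        by (simp add: mat_mult_def map_eq_conv)
      have tot: "(\<Sum>w\<in>V. x1 w) = (\<Sum>w\<in>V. x2 w)" using rows[OF BV] .
      have lay: "(\<Sum>w\<in>D v. x1 w) = (\<Sum>w\<in>D v. x2 w)" if i: "i \<in> {1..h}" and v: "v \<in> L i" for i v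
      proof -
        have "\<forall>S\<in>set (A i). (\<Sum>v\<in>g i ` S. (\<Sum>w\<in>D v. x1 w)) = (\<Sum>v\<in>g i ` S. (\<Sum>w\<in>D v. x2 w))"
        proof
          fix S assume S: "S \<in> set (A i)"
          have sub: "g i ` S \<subseteq> {v\<in>V. dist v = i}" using gS[OF S] by (simp add: L_def)
          have "(\<Sum>w\<in>row (g i ` S). x1 w) = (\<Sum>w\<in>row (g i ` S). x2 w)" by (rule rows[OF Brow[OF i S]])
          then show "(\<Sum>v\<in>g i ` S. (\<Sum>w\<in>D v. x1 w)) = (\<Sum>v\<in>g i ` S. (\<Sum>w\<in>D v. x2 w))"
            using row_sum[OF sub, of x1] row_sum[OF sub, of x2] tot by linarith
        qed
        moreover have sp: "card {v\<in>L i. (\<Sum>w\<in>D v. x w) \<noteq> 0} \<le> k" if "sparse_vec V k x" for x :: "'a \<Rightarrow> real"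
          using y_sparse[OF that, of i] by (simp add: L_def)
        moreover have Ai: "identifies {..<card (L i)} k (A i)" "zero_one_matrix {..<card (L i)} (A i)"
          using A[of i] by auto
        ultimately have "\<forall>v\<in>L i. (\<Sum>w\<in>D v. x1 w) = (\<Sum>w\<in>D v. x2 w)"
          using transfer[OF g[of i] Ai(1) Ai(2) sp[OF s1] sp[OF s2] finL[of i]] by blast
        then show ?thesis using v by blast
      qed
      have "\<forall>v\<in>V. (\<Sum>w\<in>D v. x1 w) = (\<Sum>w\<in>D v. x2 w)"
      proof
        fix v assume v: "v \<in> V"
        show "(\<Sum>w\<in>D v. x1 w) = (\<Sum>w\<in>D v. x2 w)"
        proof (cases "dist v = 0")
          case True
          then have "v = r" using dist0 v by simp
          then show ?thesis using D_r tot by simp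
        next
          case False
          then show ?thesis using lay[of "dist v" v] dh[OF v] v by (simp add: L_def)
        qed
      qed
      then have "x1 w = x2 w" for w
      proof (cases "w \<in> V")
        case False then show ?thesis using s1 s2 by (simp add: sparse_vec_def)
      qed (rule determ)
      then show False using ne by blast
    qed
  qed
  have "M_G V E k \<le> length B" unfolding M_G_def by (rule Least_le) (use mm idB in blast)
  then show ?thesis using lenB by (simp add: Lay h_def)
qed

end

theorem theorem6:
  fixes V :: "'a set" and E :: "'a \<Rightarrow> 'a \<Rightarrow> bool" and r :: 'a and k :: nat
  assumes "is_tree V E" and "r \<in> V" and "k \<ge> 1"
  shows "M_G V E k \<le> (\<Sum>i = 0..depth V E r. M_C k (card (layer V E r i)))"
proof -
  interpret ctx V E r using assms by unfold_locales (auto simp: is_tree_def)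
  show ?thesis using main[OF assms(3)] .
qed

end
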